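(* Let $n\ge 1$, $d_1,\dots,d_n\ge 1$, $L_i\in\mathbb{C}^{d_i\times d_i}$ ($i=1,\dots,n$) and $C_{i,i-1}\in\mathbb{C}^{d_i\times d_{i-1}}$ ($i=2,\dots,n$). Assume: (i) each $L_i$ is invertible and diagonalizable, $L_iV_i=V_i\Lambda_i$ with $V_i$ invertible and $\Lambda_i=\mathrm{diag}(\lambda_{i,1},\dots,\lambda_{i,d_i})$; (ii) $\sigma(L_i)\cap\sigma(L_j)=\emptyset$ for all $i\neq j$; (iii) $\|L_1\|<\|L_2\|<\cdots<\|L_n\|\le 1$. Then for every $x=(x_1,\dots,x_n)\in\mathbb{C}^{d_1}\times\cdots\times\mathbb{C}^{d_n}$, $$\lim_{t\to\infty}\big\|\mathsf{Lin}^{\circ t}(x)-\mathsf{Nom}^{\circ t}(\mathsf{pert}(x))\big\|_\times=0.$$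
   Context: Each $\mathbb{C}^{d_i}$ carries a fixed norm $\|\cdot\|$, matrices carry the induced operator norm, and $\|(x_1,\dots,x_n)\|_\times=\sum_{i=1}^n\|x_i\|$. The linear chained cascade map is $\mathsf{Lin}(x_1,\dots,x_n)=(L_1x_1,\;L_2x_2+C_{2,1}x_1,\;\dots,\;L_nx_n+C_{n,n-1}x_{n-1})$ and the nominal map is $\mathsf{Nom}(x_1,\dots,x_n)=(L_1x_1,\dots,L_nx_n)$; $\mathsf{F}^{\circ t}$ denotes the $t$-fold iterate. Matrices $D_{i,j}\in\mathbb{C}^{d_i\times d_j}$ ($1\le j\le i\le n$) are defined recursively in $i$: $D_{i,i}=I_{d_i}$; for $i\ge 2$ and $1\le j\le i-1$, let $\tilde C_{i,j}$ have entries $[\tilde C_{i,j}]_{\ell,m}=[V_i^{-1}C_{i,i-1}D_{i-1,j}V_j]_{\ell,m}\,(1-\lambda_{j,m}/\lambda_{i,\ell})^{-1}$ and set $D_{i,j}=L_i^{-1}V_i\tilde C_{i,j}V_j^{-1}$. Define $\mathsf{pert}_1(x_1)=x_1$, $\mathsf{pert}_i(x_1,\dots,x_i)=x_i+\sum_{j=1}^{i-1}(-1)^{i-1-j}D_{i,j}\,\mathsf{pert}_j(x_1,\dots,x_j)$ for $i\ge2$, and $\mathsf{pert}(x)=(\mathsf{pert}_1(x_1),\dots,\mathsf{pert}_n(x_1,\dots,x_n))$. *)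

theory Defs
  imports Complex_Main "Jordan_Normal_Form.Spectral_Radius"
begin

(* Block index i ranges over {1..n} (1-based, as in the paper); matrix/vector entries are
   0-based as in Jordan_Normal_Form. Block vectors x = (x_1,...,x_n) are functions
   nat => complex vec with x i in carrier_vec (d i). *)

definition is_norm_on :: "nat \<Rightarrow> (complex vec \<Rightarrow> real) \<Rightarrow> bool" where
  "is_norm_on k N \<longleftrightarrow>
     (\<forall>x\<in>carrier_vec k. 0 \<le> N x \<and> (N x = 0 \<longleftrightarrow> x = 0\<^sub>v k)) \<and>
     (\<forall>a. \<forall>x\<in>carrier_vec k. N (a \<cdot>\<^sub>v x) = cmod a * N x) \<and>
     (\<forall>x\<in>carrier_vec k. \<forall>y\<in>carrier_vec k. N (x + y) \<le> N x + N y)"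

definition op_norm :: "(complex vec \<Rightarrow> real) \<Rightarrow> nat \<Rightarrow> complex mat \<Rightarrow> real" where
  "op_norm N k A = Sup {N (A *\<^sub>v x) | x. x \<in> carrier_vec k \<and> N x \<le> 1}"

definition minv :: "complex mat \<Rightarrow> complex mat" where
  "minv A = (SOME B. B \<in> carrier_mat (dim_row A) (dim_row A) \<and>
                     A * B = 1\<^sub>m (dim_row A) \<and> B * A = 1\<^sub>m (dim_row A))"

(* D_{i,j}; recursion on i. lam i l = lambda_{i,l+1} (0-based entry index) *)
fun Dmat :: "(nat \<Rightarrow> nat) \<Rightarrow> (nat \<Rightarrow> complex mat) \<Rightarrow> (nat \<Rightarrow> complex mat) \<Rightarrow>
             (nat \<Rightarrow> complex mat) \<Rightarrow> (nat \<Rightarrow> nat \<Rightarrow> complex) \<Rightarrow> nat \<Rightarrow> nat \<Rightarrow> complex mat" where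
  "Dmat d L C V lam 0 j = 1\<^sub>m (d 0)"
| "Dmat d L C V lam (Suc i) j =
     (if j = Suc i then 1\<^sub>m (d (Suc i))
      else
        (let M = minv (V (Suc i)) * C (Suc i) * Dmat d L C V lam i j * V j;
             Ct = mat (d (Suc i)) (d j)
                    (\<lambda>(l, m). M $$ (l, m) * inverse (1 - lam j m / lam (Suc i) l))
         in minv (L (Suc i)) * V (Suc i) * Ct * minv (V j)))"

function pert :: "(nat \<Rightarrow> nat) \<Rightarrow> (nat \<Rightarrow> nat \<Rightarrow> complex mat) \<Rightarrow> nat \<Rightarrow> (nat \<Rightarrow> complex vec) \<Rightarrow> complex vec" where
  "pert d D i x =
     (if i \<le> 1 then x i
      else vec (d i) (\<lambda>l. x i $ l +
             (\<Sum>j\<in>{1..<i}. (-1) ^ (i - 1 - j) * ((D i j *\<^sub>v pert d D j x) $ l))))"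
  by auto
termination by (relation "measure (\<lambda>(d, D, i, x). i)") auto

definition pert_map :: "(nat \<Rightarrow> nat) \<Rightarrow> (nat \<Rightarrow> nat \<Rightarrow> complex mat) \<Rightarrow> (nat \<Rightarrow> complex vec) \<Rightarrow> (nat \<Rightarrow> complex vec)" where
  "pert_map d D x = (\<lambda>i. pert d D i x)"

definition Lin :: "(nat \<Rightarrow> complex mat) \<Rightarrow> (nat \<Rightarrow> complex mat) \<Rightarrow> (nat \<Rightarrow> complex vec) \<Rightarrow> (nat \<Rightarrow> complex vec)" where
  "Lin L C x = (\<lambda>i. if i \<le> 1 then L i *\<^sub>v x i else L i *\<^sub>v x i + C i *\<^sub>v x (i - 1))"

definition Nom :: "(nat \<Rightarrow> complex mat) \<Rightarrow> (nat \<Rightarrow> complex vec) \<Rightarrow> (nat \<Rightarrow> complex vec)" where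
  "Nom L x = (\<lambda>i. L i *\<^sub>v x i)"

definition prod_norm :: "nat \<Rightarrow> (nat \<Rightarrow> complex vec \<Rightarrow> real) \<Rightarrow> (nat \<Rightarrow> complex vec) \<Rightarrow> real" where
  "prod_norm n N x = (\<Sum>i=1..n. N i (x i))"

end

theory Submission
  imports Defs "HOL-Analysis.Function_Topology" "HOL-Analysis.Elementary_Metric_Spaces"
begin

lemma nrm_nonneg: "is_norm_on k N \<Longrightarrow> x \<in> carrier_vec k \<Longrightarrow> 0 \<le> N x"
  unfolding is_norm_on_def by blast
lemma nrm_zero_iff: "is_norm_on k N \<Longrightarrow> x \<in> carrier_vec k \<Longrightarrow> N x = 0 \<longleftrightarrow> x = 0\<^sub>v k"
  unfolding is_norm_on_def by blast
lemma nrm_smult: "is_norm_on k N \<Longrightarrow> x \<in> carrier_vec k \<Longrightarrow> N (a \<cdot>\<^sub>v x) = cmod a * N x"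
  unfolding is_norm_on_def by blast
lemma nrm_tri: "is_norm_on k N \<Longrightarrow> x \<in> carrier_vec k \<Longrightarrow> y \<in> carrier_vec k \<Longrightarrow> N (x + y) \<le> N x + N y"
  unfolding is_norm_on_def by blast

lemma nrm_swap:
  assumes "is_norm_on k N" "x \<in> carrier_vec k" "y \<in> carrier_vec k"
  shows "N (x - y) = N (y - x)"
proof -
  have "x - y = (-1) \<cdot>\<^sub>v (y - x)" by (rule eq_vecI) (use assms in auto)
  then show ?thesis using nrm_smult[OF assms(1), of "y - x" "-1"] assms by simp
qed

lemma nrm_rev_tri:
  assumes "is_norm_on k N" "x \<in> carrier_vec k" "y \<in> carrier_vec k"
  shows "N x - N y \<le> N (x - y)"
proof -
  have "x = (x - y) + y" by (rule eq_vecI) (use assms in auto)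
  then have "N x \<le> N (x - y) + N y" using nrm_tri[OF assms(1), of "x - y" y] assms
    by (metis minus_carrier_vec)
  then show ?thesis by simp
qed

lemma nrm_abs_diff:
  assumes "is_norm_on k N" "x \<in> carrier_vec k" "y \<in> carrier_vec k"
  shows "\<bar>N x - N y\<bar> \<le> N (x - y)"
  using nrm_rev_tri[OF assms] nrm_rev_tri[OF assms(1,3,2)] nrm_swap[OF assms] by linarith

lemma nrm_ub:
  assumes nN: "is_norm_on k N" and v: "v \<in> carrier_vec k"
  shows "N v \<le> (\<Sum>l<k. cmod (v $ l) * N (unit_vec k l))"
proof -
  have "p \<le> k \<Longrightarrow> N (vec k (\<lambda>l. if l < p then v $ l else 0)) \<le> (\<Sum>l<p. cmod (v $ l) * N (unit_vec k l))" for p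
  proof (induction p)
    case 0
    have "vec k (\<lambda>l. if l < 0 then v $ l else 0) = 0\<^sub>v k" by (rule eq_vecI) auto
    then show ?case using nrm_zero_iff[OF nN, of "0\<^sub>v k"] by simp
  next
    case (Suc p)
    have e: "vec k (\<lambda>l. if l < Suc p then v $ l else 0) = vec k (\<lambda>l. if l < p then v $ l else 0) + (v $ p) \<cdot>\<^sub>v unit_vec k p"
      by (rule eq_vecI) (auto simp: unit_vec_def less_Suc_eq)
    have "N (vec k (\<lambda>l. if l < Suc p then v $ l else 0)) \<le> N (vec k (\<lambda>l. if l < p then v $ l else 0)) + N ((v $ p) \<cdot>\<^sub>v unit_vec k p)"
      unfolding e by (rule nrm_tri[OF nN]) auto
    also have "\<dots> = N (vec k (\<lambda>l. if l < p then v $ l else 0)) + cmod (v $ p) * N (unit_vec k p)"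
      using nrm_smult[OF nN] by simp
    also have "\<dots> \<le> (\<Sum>l<p. cmod (v $ l) * N (unit_vec k l)) + cmod (v $ p) * N (unit_vec k p)"
      using Suc by simp
    finally show ?case by simp
  qed
  from this[of k] have "N (vec k (\<lambda>l. if l < k then v $ l else 0)) \<le> (\<Sum>l<k. cmod (v $ l) * N (unit_vec k l))" by simp
  moreover have "vec k (\<lambda>l. if l < k then v $ l else 0) = v" by (rule eq_vecI) (use v in auto)
  ultimately show ?thesis by simp
qed

lemma nrm_cont:
  assumes nN: "is_norm_on k N"
    and lim: "\<And>l. l < k \<Longrightarrow> ((\<lambda>h. h l) \<longlongrightarrow> x l) F"
  shows "((\<lambda>h. N (vec k h)) \<longlongrightarrow> N (vec k x)) F"
proof -
  define b where "b h = (\<Sum>l<k. cmod (h l - x l) * N (unit_vec k l))" for h :: "nat \<Rightarrow> complex"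
  have b0: "(b \<longlongrightarrow> 0) F"
    unfolding b_def
  proof (rule tendsto_null_sum)
    fix l assume "l \<in> {..<k}"
    then have "((\<lambda>h. h l - x l) \<longlongrightarrow> 0) F" using lim[of l] by (simp add: LIM_zero)
    then have "((\<lambda>h. cmod (h l - x l)) \<longlongrightarrow> 0) F" by (rule tendsto_norm_zero)
    then show "((\<lambda>h. cmod (h l - x l) * N (unit_vec k l)) \<longlongrightarrow> 0) F"
      by (rule tendsto_mult_left_zero)
  qed
  have bd: "\<bar>N (vec k h) - N (vec k x)\<bar> \<le> b h" for h
  proof -
    have "\<bar>N (vec k h) - N (vec k x)\<bar> \<le> N (vec k h - vec k x)" by (rule nrm_abs_diff[OF nN]) auto
    also have "\<dots> \<le> (\<Sum>l<k. cmod ((vec k h - vec k x) $ l) * N (unit_vec k l))" by (rule nrm_ub[OF nN]) auto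
    also have "\<dots> = b h" unfolding b_def by (intro sum.cong) auto
    finally show ?thesis .
  qed
  show ?thesis
  proof (rule tendsto_sandwich[of "\<lambda>h. N (vec k x) - b h" _ _ "\<lambda>h. N (vec k x) + b h"])
    show "\<forall>\<^sub>F h in F. N (vec k x) - b h \<le> N (vec k h)" using bd by (intro always_eventually) (smt (verit))
    show "\<forall>\<^sub>F h in F. N (vec k h) \<le> N (vec k x) + b h" using bd by (intro always_eventually) (smt (verit))
    show "((\<lambda>h. N (vec k x) - b h) \<longlongrightarrow> N (vec k x)) F" using tendsto_diff[OF tendsto_const b0] by simp
    show "((\<lambda>h. N (vec k x) + b h) \<longlongrightarrow> N (vec k x)) F" using tendsto_add[OF tendsto_const b0] by simp
  qed
qed


lemma nrm_lb:
  assumes nN: "is_norm_on k N"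
  shows "\<exists>c>0. \<forall>v\<in>carrier_vec k. \<forall>l<k. cmod (v $ l) \<le> c * N v"
proof (cases "k = 0")
  case True then show ?thesis by (intro exI[of _ 1]) auto
next
  case False
  define Q where "Q = {z::complex. \<bar>Re z\<bar> \<le> 1 \<and> \<bar>Im z\<bar> \<le> 1}"
  have cQ: "compact Q"
  proof -
    have "compact ((\<lambda>p. complex_of_real (fst p) + \<i> * complex_of_real (snd p)) ` ({-1..1::real} \<times> {-1..1::real}))"
      by (intro compact_continuous_image compact_Times compact_Icc continuous_intros)
    moreover have "(\<lambda>p. complex_of_real (fst p) + \<i> * complex_of_real (snd p)) ` ({-1..1::real} \<times> {-1..1::real}) = Q"
    proof
      show "Q \<subseteq> (\<lambda>p. complex_of_real (fst p) + \<i> * complex_of_real (snd p)) ` ({-1..1::real} \<times> {-1..1::real})"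
      proof
        fix z assume "z \<in> Q"
        then show "z \<in> (\<lambda>p. complex_of_real (fst p) + \<i> * complex_of_real (snd p)) ` ({-1..1::real} \<times> {-1..1::real})"
          by (intro image_eqI[of _ _ "(Re z, Im z)"]) (auto simp: Q_def complex_eq_iff abs_le_iff)
      qed
    qed (auto simp: Q_def)
    ultimately show ?thesis by simp
  qed
  define S where "S = (\<lambda>i::nat. if i < k then Q else {0})"
  define B where "B = PiE UNIV S"
  have cB: "compact B"
  proof -
    have "compactin (product_topology (\<lambda>i. euclidean) UNIV) B"
      unfolding B_def compactin_PiE using cQ by (auto simp: S_def)
    then show ?thesis by (simp add: euclidean_product_topology)
  qed
  define K where "K = (\<Union>l<k. B \<inter> {f. cmod (f l) = 1})"
  have cK: "compact K" unfolding K_def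
  proof (intro compact_UN compact_Int_closed cB)
    fix l show "closed {f::nat\<Rightarrow>complex. cmod (f l) = 1}"
      by (intro closed_Collect_eq continuous_intros continuous_on_product_coordinates)
  qed auto
  define f1 where "f1 = (\<lambda>i::nat. if i = 0 then (1::complex) else 0)"
  have "f1 \<in> K" using False unfolding K_def B_def S_def f1_def Q_def by (auto simp: PiE_def extensional_def)
  then have Kne: "K \<noteq> {}" by auto
  define g where "g h = N (vec k h)" for h :: "nat \<Rightarrow> complex"
  have cg: "continuous_on K g"
    unfolding continuous_on_def g_def
  proof (intro ballI nrm_cont[OF nN])
    fix x l assume "x \<in> K"
    have "continuous_on K (\<lambda>h::nat\<Rightarrow>complex. h l)"
      by (rule continuous_on_subset[OF continuous_on_product_coordinates]) auto
    then show "((\<lambda>h. h l) \<longlongrightarrow> x l) (at x within K)" using \<open>x \<in> K\<close> unfolding continuous_on_def by blast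
  qed
  obtain f0 where f0: "f0 \<in> K" and fmin: "\<And>h. h \<in> K \<Longrightarrow> g f0 \<le> g h"
    using continuous_attains_inf[OF cK Kne cg] by blast
  obtain l0 where l0: "l0 < k" "cmod (f0 l0) = 1" using f0 unfolding K_def by auto
  have "vec k f0 \<noteq> 0\<^sub>v k"
  proof
    assume "vec k f0 = 0\<^sub>v k"
    then have "vec k f0 $ l0 = 0" using l0 by simp
    then show False using l0 by simp
  qed
  then have m0: "g f0 > 0" unfolding g_def using nrm_zero_iff[OF nN, of "vec k f0"] nrm_nonneg[OF nN, of "vec k f0"] by auto
  show ?thesis
  proof (intro exI[of _ "1 / g f0"] conjI ballI allI impI)
    show "0 < 1 / g f0" using m0 by simp
    fix v :: "complex vec" and l assume v: "v \<in> carrier_vec k" and l: "l < k"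
    show "cmod (v $ l) \<le> 1 / g f0 * N v"
    proof (cases "v = 0\<^sub>v k")
      case True then show ?thesis using l nrm_nonneg[OF nN, of "0\<^sub>v k"] m0 by simp
    next
      case vnz: False
      define M where "M = Max ((\<lambda>i. cmod (v $ i)) ` {..<k})"
      have Mge: "cmod (v $ i) \<le> M" if "i < k" for i unfolding M_def using that by (intro Max_ge) auto
      obtain i0 where i0: "i0 < k" "M = cmod (v $ i0)"
      proof -
        have "M \<in> (\<lambda>i. cmod (v $ i)) ` {..<k}" unfolding M_def using False by (intro Max_in) auto
        then show ?thesis using that by auto
      qed
      have "\<exists>i<k. v $ i \<noteq> 0"
      proof (rule ccontr)
        assume "\<not> ?thesis"
        then have "v = 0\<^sub>v k" using v by (intro eq_vecI) auto
        then show False using vnz by simp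
      qed
      then obtain i1 where "i1 < k" "v $ i1 \<noteq> 0" by blast
      then have Mpos: "M > 0" using Mge[of i1] by (smt (verit) zero_less_norm_iff)
      define h where "h = (\<lambda>i. if i < k then v $ i / complex_of_real M else 0)"
      have "h \<in> K" unfolding K_def B_def S_def
      proof (intro UN_I[of i0] IntI)
        show "h \<in> {f. cmod (f i0) = 1}" using i0 Mpos by (simp add: h_def norm_divide)
        have "cmod (h i) \<le> 1" for i using Mge Mpos by (auto simp: h_def norm_divide divide_le_eq_1)
        then have "\<bar>Re (h i)\<bar> \<le> 1 \<and> \<bar>Im (h i)\<bar> \<le> 1" for i using abs_Re_le_cmod abs_Im_le_cmod order_trans by metis
        then have hQ: "h i \<in> Q" for i unfolding Q_def by blast
        have "h i \<in> (if i < k then Q else {0})" for i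
          using hQ[of i] by (cases "i < k") (auto simp: h_def)
        then show "h \<in> PiE UNIV (\<lambda>i. if i < k then Q else {0})"
          by (simp add: PiE_UNIV_domain)
      qed (use i0 in auto)
      then have "g f0 \<le> g h" by (rule fmin)
      also have "g h = N (complex_of_real (inverse M) \<cdot>\<^sub>v v)"
        unfolding g_def by (rule arg_cong[where f=N], rule eq_vecI) (use v in \<open>auto simp: h_def field_simps\<close>)
      also have "\<dots> = N v / M" using nrm_smult[OF nN v, of "complex_of_real (inverse M)"] Mpos
        by (simp add: norm_inverse divide_inverse mult.commute)
      finally have "g f0 \<le> N v / M" .
      then have "M \<le> N v / g f0" using m0 Mpos by (simp add: field_simps)
      then show ?thesis using Mge[OF l] by simp
    qed
  qed
qed

lemma minv_props:
  assumes A: "A \<in> carrier_mat k k" and inv: "invertible_mat A"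
  shows "minv A \<in> carrier_mat k k \<and> A * minv A = 1\<^sub>m k \<and> minv A * A = 1\<^sub>m k"
proof -
  obtain B where AB: "A * B = 1\<^sub>m (dim_row A)" and BA: "B * A = 1\<^sub>m (dim_row B)"
    using inv unfolding invertible_mat_def inverts_mat_def by blast
  have "dim_col (B * A) = k" using A by simp
  then have rB: "dim_row B = k" using BA by (metis index_one_mat(3))
  have "dim_col (A * B) = dim_col B" by simp
  then have cB: "dim_col B = k" using AB A by (metis carrier_matD(1) index_one_mat(3))
  have Bc: "B \<in> carrier_mat k k" using rB cB by auto
  have ex: "\<exists>B. B \<in> carrier_mat (dim_row A) (dim_row A) \<and> A * B = 1\<^sub>m (dim_row A) \<and> B * A = 1\<^sub>m (dim_row A)"
    using Bc AB BA A rB by auto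
  show ?thesis using someI_ex[OF ex] A unfolding minv_def by auto
qed

lemma if_times0: "(if P then a else (0::complex)) * b = (if P then a * b else 0)" by simp
lemma times_if0: "b * (if P then a else (0::complex)) = (if P then b * a else 0)" by simp

lemma sd1: "finite S \<Longrightarrow> l \<in> S \<Longrightarrow> (\<Sum>i\<in>S. (if l = i then c else 0) * (X i::complex)) = c * X l"
proof -
  assume "finite S" "l \<in> S"
  have "(\<Sum>i\<in>S. (if l = i then c else 0) * X i) = (\<Sum>i\<in>S. if i = l then c * X l else 0)" by (rule sum.cong) auto
  then show ?thesis using \<open>finite S\<close> \<open>l \<in> S\<close> by simp
qed
lemma sd2: "finite S \<Longrightarrow> m \<in> S \<Longrightarrow> (\<Sum>i\<in>S. (X i::complex) * (if i = m then f i else 0)) = X m * f m"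
proof -
  assume "finite S" "m \<in> S"
  have "(\<Sum>i\<in>S. X i * (if i = m then f i else 0)) = (\<Sum>i\<in>S. if i = m then X m * f m else 0)" by (rule sum.cong) auto
  then show ?thesis using \<open>finite S\<close> \<open>m \<in> S\<close> by simp
qed

lemma diag_mult_left:
  fixes A :: "complex mat"
  assumes "A \<in> carrier_mat a b" "l < a" "m < b"
  shows "(mat a a (\<lambda>(l, m). if l = m then f l else 0) * A) $$ (l, m) = f l * A $$ (l, m)"
  using assms by (simp add: scalar_prod_def sd1)

lemma diag_mult_right:
  fixes A :: "complex mat"
  assumes "A \<in> carrier_mat a b" "l < a" "m < b"
  shows "(A * mat b b (\<lambda>(l, m). if l = m then f l else 0)) $$ (l, m) = A $$ (l, m) * f m"
  using assms by (simp add: scalar_prod_def sd2)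

lemma diag_mult_vec:
  fixes v :: "complex vec"
  assumes "v \<in> carrier_vec a" "l < a"
  shows "(mat a a (\<lambda>(l, m). if l = m then f l else 0) *\<^sub>v v) $ l = f l * v $ l"
  using assms by (simp add: scalar_prod_def sd1)

lemma mv_lin_sum:
  fixes A :: "complex mat"
  assumes A: "A \<in> carrier_mat a b" and vs: "\<And>j. j \<in> J \<Longrightarrow> v j \<in> carrier_vec b"
  shows "A *\<^sub>v vec b (\<lambda>m. \<Sum>j\<in>J. c j * (v j $ m)) = vec a (\<lambda>l. \<Sum>j\<in>J. c j * ((A *\<^sub>v v j) $ l))"
proof (rule eq_vecI)
  fix l assume "l < dim_vec (vec a (\<lambda>l. \<Sum>j\<in>J. c j * ((A *\<^sub>v v j) $ l)))"
  then have l: "l < a" by simp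
  have "(A *\<^sub>v vec b (\<lambda>m. \<Sum>j\<in>J. c j * (v j $ m))) $ l = (\<Sum>m<b. A $$ (l, m) * (\<Sum>j\<in>J. c j * (v j $ m)))"
    using A l by (simp add: scalar_prod_def lessThan_atLeast0)
  also have "\<dots> = (\<Sum>j\<in>J. c j * (\<Sum>m<b. A $$ (l, m) * v j $ m))"
    unfolding sum_distrib_left by (subst sum.swap) (auto intro!: sum.cong simp: algebra_simps)
  also have "\<dots> = (\<Sum>j\<in>J. c j * ((A *\<^sub>v v j) $ l))"
  proof (intro sum.cong refl)
    fix j assume "j \<in> J"
    then have vj: "v j \<in> carrier_vec b" by (rule vs)
    have "(A *\<^sub>v v j) $ l = (\<Sum>m\<in>{0..<b}. row A l $ m * v j $ m)" using A l vj by (simp add: scalar_prod_def)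
    also have "\<dots> = (\<Sum>m<b. A $$ (l, m) * v j $ m)" using A l by (auto simp: lessThan_atLeast0 intro!: sum.cong)
    finally show "c j * (\<Sum>m<b. A $$ (l, m) * v j $ m) = c j * (A *\<^sub>v v j) $ l" by simp
  qed
  finally show "(A *\<^sub>v vec b (\<lambda>m. \<Sum>j\<in>J. c j * (v j $ m))) $ l = vec a (\<lambda>l. \<Sum>j\<in>J. c j * ((A *\<^sub>v v j) $ l)) $ l"
    using l by simp
qed (use A in simp)

lemma mv_entry:
  fixes A :: "complex mat"
  assumes A: "A \<in> carrier_mat a b" and w: "w \<in> carrier_vec b" and l: "l < a"
  shows "(A *\<^sub>v w) $ l = (\<Sum>m<b. A $$ (l, m) * w $ m)"
proof -
  have "(A *\<^sub>v w) $ l = (\<Sum>m\<in>{0..<b}. row A l $ m * w $ m)" using A l w by (simp add: scalar_prod_def)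
  also have "\<dots> = (\<Sum>m<b. A $$ (l, m) * w $ m)" using A l by (auto simp: lessThan_atLeast0 intro!: sum.cong)
  finally show ?thesis .
qed

lemma mv_entry_mat:
  assumes w: "(w::complex vec) \<in> carrier_vec b" and l: "l < a"
  shows "(mat a b f *\<^sub>v w) $ l = (\<Sum>m<b. f (l, m) * w $ m)"
  using mv_entry[OF mat_carrier w l] l by (auto intro!: sum.cong)

lemma canc_v:
  fixes A B :: "complex mat"
  assumes "A \<in> carrier_mat k k" "B \<in> carrier_mat k k" "A * B = 1\<^sub>m k" "w \<in> carrier_vec k"
  shows "A *\<^sub>v (B *\<^sub>v w) = w"
proof -
  have "(A * B) *\<^sub>v w = A *\<^sub>v (B *\<^sub>v w)" by (rule assoc_mult_mat_vec) (use assms in auto)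
  then show ?thesis using assms by simp
qed

lemma assoc3_v:
  fixes A B E :: "complex mat"
  assumes "A \<in> carrier_mat a b" "B \<in> carrier_mat b c" "E \<in> carrier_mat c e" "w \<in> carrier_vec e"
  shows "(A * B * E) *\<^sub>v w = A *\<^sub>v (B *\<^sub>v (E *\<^sub>v w))"
proof -
  have AB: "A * B \<in> carrier_mat a c" using assms by simp
  have "(A * B * E) *\<^sub>v w = (A * B) *\<^sub>v (E *\<^sub>v w)" by (rule assoc_mult_mat_vec[OF AB]) (use assms in auto)
  also have "\<dots> = A *\<^sub>v (B *\<^sub>v (E *\<^sub>v w))" by (rule assoc_mult_mat_vec) (use assms in auto)
  finally show ?thesis .
qed

lemma assoc4_v:
  fixes A B E F :: "complex mat"
  assumes "A \<in> carrier_mat a b" "B \<in> carrier_mat b c" "E \<in> carrier_mat c e" "F \<in> carrier_mat e f" "w \<in> carrier_vec f"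
  shows "(A * B * E * F) *\<^sub>v w = A *\<^sub>v (B *\<^sub>v (E *\<^sub>v (F *\<^sub>v w)))"
proof -
  have ABE: "A * B * E \<in> carrier_mat a e" using assms by simp
  have "(A * B * E * F) *\<^sub>v w = (A * B * E) *\<^sub>v (F *\<^sub>v w)" by (rule assoc_mult_mat_vec[OF ABE]) (use assms in auto)
  also have "\<dots> = A *\<^sub>v (B *\<^sub>v (E *\<^sub>v (F *\<^sub>v w)))" by (rule assoc3_v) (use assms in auto)
  finally show ?thesis .
qed

locale casc =
  fixes n :: nat and d :: "nat \<Rightarrow> nat"
    and N :: "nat \<Rightarrow> complex vec \<Rightarrow> real"
    and L C V :: "nat \<Rightarrow> complex mat"
    and lam :: "nat \<Rightarrow> nat \<Rightarrow> complex"
  assumes n: "n \<ge> 1"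
    and norms: "\<And>i. i \<in> {1..n} \<Longrightarrow> is_norm_on (d i) (N i)"
    and L_car: "\<And>i. i \<in> {1..n} \<Longrightarrow> L i \<in> carrier_mat (d i) (d i)"
    and C_car: "\<And>i. i \<in> {2..n} \<Longrightarrow> C i \<in> carrier_mat (d i) (d (i - 1))"
    and L_inv: "\<And>i. i \<in> {1..n} \<Longrightarrow> invertible_mat (L i)"
    and V_car: "\<And>i. i \<in> {1..n} \<Longrightarrow> V i \<in> carrier_mat (d i) (d i)"
    and V_inv: "\<And>i. i \<in> {1..n} \<Longrightarrow> invertible_mat (V i)"
    and diagonalize: "\<And>i. i \<in> {1..n} \<Longrightarrow>
          L i * V i = V i * mat (d i) (d i) (\<lambda>(l, m). if l = m then lam i l else 0)"
    and spec_disj: "\<And>i j. i \<in> {1..n} \<Longrightarrow> j \<in> {1..n} \<Longrightarrow> i \<noteq> j \<Longrightarrow>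
          spectrum (L i) \<inter> spectrum (L j) = {}"
    and norm_incr: "\<And>i. i \<in> {1..<n} \<Longrightarrow> op_norm (N i) (d i) (L i) < op_norm (N (Suc i)) (d (Suc i)) (L (Suc i))"
    and norm_le1: "op_norm (N n) (d n) (L n) \<le> 1"
begin

abbreviation "W i \<equiv> minv (V i)"
abbreviation "Li i \<equiv> minv (L i)"
abbreviation "Lam i \<equiv> mat (d i) (d i) (\<lambda>(l, m). if l = m then lam i l else 0)"
abbreviation "Lami i \<equiv> mat (d i) (d i) (\<lambda>(l, m). if l = m then inverse (lam i l) else 0)"
abbreviation "DD \<equiv> Dmat d L C V lam"

lemma mv_zero: "(A::complex mat) \<in> carrier_mat a b \<Longrightarrow> A *\<^sub>v 0\<^sub>v b = 0\<^sub>v a"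
  by (rule eq_vecI) auto
lemma smult0_vec: "v \<in> carrier_vec k \<Longrightarrow> (0::complex) \<cdot>\<^sub>v v = 0\<^sub>v k"
  by (rule eq_vecI) auto


lemma W_props: "i \<in> {1..n} \<Longrightarrow> W i \<in> carrier_mat (d i) (d i) \<and> V i * W i = 1\<^sub>m (d i) \<and> W i * V i = 1\<^sub>m (d i)"
  using minv_props[OF V_car V_inv] by blast
lemma Li_props: "i \<in> {1..n} \<Longrightarrow> Li i \<in> carrier_mat (d i) (d i) \<and> L i * Li i = 1\<^sub>m (d i) \<and> Li i * L i = 1\<^sub>m (d i)"
  using minv_props[OF L_car L_inv] by blast

lemma W_car: "i \<in> {1..n} \<Longrightarrow> W i \<in> carrier_mat (d i) (d i)" using W_props by blast
lemma VW: "i \<in> {1..n} \<Longrightarrow> V i * W i = 1\<^sub>m (d i)" using W_props by blast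
lemma WV: "i \<in> {1..n} \<Longrightarrow> W i * V i = 1\<^sub>m (d i)" using W_props by blast
lemma Li_car: "i \<in> {1..n} \<Longrightarrow> Li i \<in> carrier_mat (d i) (d i)" using Li_props by blast
lemma LLi: "i \<in> {1..n} \<Longrightarrow> L i * Li i = 1\<^sub>m (d i)" using Li_props by blast
lemma LiL: "i \<in> {1..n} \<Longrightarrow> Li i * L i = 1\<^sub>m (d i)" using Li_props by blast


lemma eigvec:
  assumes i: "i \<in> {1..n}" and l: "l < d i"
  shows "V i *\<^sub>v unit_vec (d i) l \<in> carrier_vec (d i)"
    "V i *\<^sub>v unit_vec (d i) l \<noteq> 0\<^sub>v (d i)"
    "L i *\<^sub>v (V i *\<^sub>v unit_vec (d i) l) = lam i l \<cdot>\<^sub>v (V i *\<^sub>v unit_vec (d i) l)"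
proof -
  note Vc = V_car[OF i] and Lc = L_car[OF i] and Wp = W_car[OF i] VW[OF i] WV[OF i]
  show "V i *\<^sub>v unit_vec (d i) l \<in> carrier_vec (d i)" using Vc by simp
  show "V i *\<^sub>v unit_vec (d i) l \<noteq> 0\<^sub>v (d i)"
  proof
    assume "V i *\<^sub>v unit_vec (d i) l = 0\<^sub>v (d i)"
    then have "W i *\<^sub>v (V i *\<^sub>v unit_vec (d i) l) = 0\<^sub>v (d i)" using Wp mv_zero by simp
    moreover have "W i *\<^sub>v (V i *\<^sub>v unit_vec (d i) l) = unit_vec (d i) l"
      using Wp Vc by (simp flip: assoc_mult_mat_vec)
    ultimately show False using l by simp
  qed
  have "Lam i *\<^sub>v unit_vec (d i) l = lam i l \<cdot>\<^sub>v unit_vec (d i) l"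
  proof (rule eq_vecI)
    fix a assume "a < dim_vec (lam i l \<cdot>\<^sub>v unit_vec (d i) l)"
    then have a: "a < d i" by simp
    show "(Lam i *\<^sub>v unit_vec (d i) l) $ a = (lam i l \<cdot>\<^sub>v unit_vec (d i) l) $ a"
      by (subst diag_mult_vec[OF unit_vec_carrier a]) (cases "a = l"; use a l in simp)
  qed auto
  then show "L i *\<^sub>v (V i *\<^sub>v unit_vec (d i) l) = lam i l \<cdot>\<^sub>v (V i *\<^sub>v unit_vec (d i) l)"
  proof -
    have "L i *\<^sub>v (V i *\<^sub>v unit_vec (d i) l) = (L i * V i) *\<^sub>v unit_vec (d i) l"
      by (rule assoc_mult_mat_vec[symmetric, OF Lc Vc unit_vec_carrier])
    also have "\<dots> = (V i * Lam i) *\<^sub>v unit_vec (d i) l" using diagonalize[OF i] by simp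
    also have "\<dots> = V i *\<^sub>v (Lam i *\<^sub>v unit_vec (d i) l)"
      by (rule assoc_mult_mat_vec[OF Vc mat_carrier unit_vec_carrier])
    also have "\<dots> = V i *\<^sub>v (lam i l \<cdot>\<^sub>v unit_vec (d i) l)" using \<open>Lam i *\<^sub>v unit_vec (d i) l = lam i l \<cdot>\<^sub>v unit_vec (d i) l\<close> by simp
    also have "\<dots> = lam i l \<cdot>\<^sub>v (V i *\<^sub>v unit_vec (d i) l)" by (rule mult_mat_vec[OF Vc unit_vec_carrier])
    finally show ?thesis .
  qed
qed

lemma lam_nz:
  assumes i: "i \<in> {1..n}" and l: "l < d i"
  shows "lam i l \<noteq> 0"
proof
  assume z: "lam i l = 0"
  let ?u = "V i *\<^sub>v unit_vec (d i) l"
  have "L i *\<^sub>v ?u = 0\<^sub>v (d i)" using eigvec[OF i l] z smult0_vec by auto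
  then have "Li i *\<^sub>v (L i *\<^sub>v ?u) = 0\<^sub>v (d i)" using Li_car[OF i] mv_zero by simp
  moreover have "Li i *\<^sub>v (L i *\<^sub>v ?u) = ?u" using Li_car[OF i] LiL[OF i] L_car[OF i] eigvec(1)[OF i l]
    by (simp flip: assoc_mult_mat_vec)
  ultimately show False using eigvec(2)[OF i l] by simp
qed

lemma lam_spec:
  assumes i: "i \<in> {1..n}" and l: "l < d i"
  shows "lam i l \<in> spectrum (L i)"
  unfolding spectrum_def eigenvalue_def eigenvector_def
  using eigvec[OF i l] L_car[OF i] by auto

lemma lam_disj:
  assumes "i \<in> {1..n}" "j \<in> {1..n}" "i \<noteq> j" "l < d i" "m < d j"
  shows "lam i l \<noteq> lam j m"
  using spec_disj[OF assms(1-3)] lam_spec[OF assms(1,4)] lam_spec[OF assms(2,5)] by auto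


lemma WL_v:
  assumes j: "j \<in> {1..n}" and v: "v \<in> carrier_vec (d j)"
  shows "W j *\<^sub>v (L j *\<^sub>v v) = Lam j *\<^sub>v (W j *\<^sub>v v)"
proof -
  have Wv: "W j *\<^sub>v v \<in> carrier_vec (d j)" using W_car[OF j] v by simp
  have "L j *\<^sub>v v = L j *\<^sub>v (V j *\<^sub>v (W j *\<^sub>v v))" using canc_v[OF V_car[OF j] W_car[OF j] VW[OF j] v] by simp
  also have "\<dots> = (L j * V j) *\<^sub>v (W j *\<^sub>v v)" using L_car[OF j] V_car[OF j] Wv by simp
  also have "\<dots> = (V j * Lam j) *\<^sub>v (W j *\<^sub>v v)" using diagonalize[OF j] by simp
  also have "\<dots> = V j *\<^sub>v (Lam j *\<^sub>v (W j *\<^sub>v v))" by (rule assoc_mult_mat_vec[OF V_car[OF j] mat_carrier Wv])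
  finally have "W j *\<^sub>v (L j *\<^sub>v v) = W j *\<^sub>v (V j *\<^sub>v (Lam j *\<^sub>v (W j *\<^sub>v v)))" by simp
  also have "\<dots> = Lam j *\<^sub>v (W j *\<^sub>v v)" by (rule canc_v[OF W_car[OF j] V_car[OF j] WV[OF j] mult_mat_vec_carrier[OF mat_carrier Wv]])
  finally show ?thesis .
qed

lemma Li_v:
  assumes i: "i \<in> {1..n}" and z: "z \<in> carrier_vec (d i)"
  shows "Lam i *\<^sub>v (W i *\<^sub>v (Li i *\<^sub>v z)) = W i *\<^sub>v z"
proof -
  have "Li i *\<^sub>v z \<in> carrier_vec (d i)" using Li_car[OF i] z by simp
  from WL_v[OF i this] show ?thesis using canc_v[OF L_car[OF i] Li_car[OF i] LLi[OF i] z] by simp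
qed

abbreviation "Mm i j \<equiv> W i * C i * DD (i - 1) j * V j"
abbreviation "Ct i j \<equiv> mat (d i) (d j) (\<lambda>(l, m). Mm i j $$ (l, m) * inverse (1 - lam j m / lam i l))"

lemma DD_dim: "1 \<le> j \<Longrightarrow> j \<le> i \<Longrightarrow> i \<le> n \<Longrightarrow> DD i j \<in> carrier_mat (d i) (d j)"
proof (induction i)
  case 0 then show ?case by simp
next
  case (Suc i)
  show ?case
  proof (cases "j = Suc i")
    case True then show ?thesis by simp
  next
    case False
    then have ji: "j \<le> i" using Suc by simp
    have iI: "Suc i \<in> {1..n}" and jI: "j \<in> {1..n}" using Suc by auto
    have c: "minv (L (Suc i)) * V (Suc i) * mat (d (Suc i)) (d j) f * minv (V j) \<in> carrier_mat (d (Suc i)) (d j)" for f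
      by (rule mult_carrier_mat[OF mult_carrier_mat[OF mult_carrier_mat[OF Li_car[OF iI] V_car[OF iI]] mat_carrier] W_car[OF jI]])
    show ?thesis using False c by (simp add: Let_def)
  qed
qed

lemma DD_eq:
  assumes "2 \<le> i" "1 \<le> j" "j < i"
  shows "DD i j = Li i * V i * Ct i j * W j"
proof -
  obtain i' where i': "i = Suc i'" using assms by (cases i) auto
  show ?thesis using assms unfolding i' by (simp add: Let_def)
qed

lemma aux_field:
  assumes "b \<noteq> 0" "mm = cc * (1 - a / b)"
  shows "cc * (a * x) / b + mm * x = cc * (x::complex)"
proof -
  have e: "b * mm = b * cc - a * cc" using assms by (simp add: field_simps)
  have s0: "b * mm * x = (b * cc - a * cc) * x" using e by simp
  have s: "a * cc * x + b * mm * x = b * cc * x" unfolding s0 by (simp add: algebra_simps)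
  have "cc * (a * x) / b + mm * x = (a * cc * x + b * mm * x) / b" using assms(1) by (simp add: field_simps)
  also have "\<dots> = (b * cc * x) / b" using s by simp
  also have "\<dots> = cc * x" using assms(1) by simp
  finally show ?thesis .
qed

lemma sylv:
  assumes i: "2 \<le> i" "i \<le> n" and j: "1 \<le> j" "j < i" and v: "v \<in> carrier_vec (d j)"
  shows "L i *\<^sub>v (DD i j *\<^sub>v v) = DD i j *\<^sub>v (L j *\<^sub>v v) + C i *\<^sub>v (DD (i - 1) j *\<^sub>v v)"
proof -
  have iI: "i \<in> {1..n}" and jI: "j \<in> {1..n}" and ij: "i \<noteq> j" and i2: "i \<in> {2..n}" using i j by auto
  note Lic = Li_car[OF iI] and Vic = V_car[OF iI] and Wic = W_car[OF iI] and Lc = L_car[OF iI]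
  note Vjc = V_car[OF jI] and Wjc = W_car[OF jI] and Ljc = L_car[OF jI] and Cc = C_car[OF i2]
  have D'c: "DD (i - 1) j \<in> carrier_mat (d (i - 1)) (d j)" using DD_dim[of j "i - 1"] i j by simp
  have Dc: "DD i j \<in> carrier_mat (d i) (d j)" using DD_dim[of j i] i j by simp
  have Ctc: "Ct i j \<in> carrier_mat (d i) (d j)" by simp
  define u where "u = W j *\<^sub>v v"
  have uc: "u \<in> carrier_vec (d j)" unfolding u_def using Wjc v by simp
  have Dv: "DD i j *\<^sub>v w = Li i *\<^sub>v (V i *\<^sub>v (Ct i j *\<^sub>v (W j *\<^sub>v w)))" if "w \<in> carrier_vec (d j)" for w
    unfolding DD_eq[OF i(1) j] by (rule assoc4_v[OF Lic Vic Ctc Wjc that])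
  have yc: "Ct i j *\<^sub>v w \<in> carrier_vec (d i)" "V i *\<^sub>v (Ct i j *\<^sub>v w) \<in> carrier_vec (d i)" if "w \<in> carrier_vec (d j)" for w
    by (rule mult_mat_vec_carrier[OF mat_carrier that], rule mult_mat_vec_carrier[OF Vic mult_mat_vec_carrier[OF mat_carrier that]])
  have e1: "W i *\<^sub>v (L i *\<^sub>v (DD i j *\<^sub>v v)) = Ct i j *\<^sub>v u"
    unfolding Dv[OF v] u_def
    using canc_v[OF Lc Lic LLi[OF iI] yc(2)[OF uc[unfolded u_def]]] canc_v[OF Wic Vic WV[OF iI] yc(1)[OF uc[unfolded u_def]]] by simp
  have Ljv: "L j *\<^sub>v v \<in> carrier_vec (d j)" using Ljc v by simp
  have e2: "Lam i *\<^sub>v (W i *\<^sub>v (DD i j *\<^sub>v (L j *\<^sub>v v))) = Ct i j *\<^sub>v (Lam j *\<^sub>v u)"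
  proof -
    have Lu: "Lam j *\<^sub>v u \<in> carrier_vec (d j)" by (rule mult_mat_vec_carrier[OF mat_carrier uc])
    show ?thesis unfolding Dv[OF Ljv] WL_v[OF jI v] using Li_v[OF iI yc(2)[OF Lu]] canc_v[OF Wic Vic WV[OF iI] yc(1)[OF Lu]] by (simp add: u_def)
  qed
  have e3: "W i *\<^sub>v (C i *\<^sub>v (DD (i - 1) j *\<^sub>v v)) = Mm i j *\<^sub>v u"
    using assoc4_v[OF Wic Cc D'c Vjc uc] canc_v[OF Vjc Wjc VW[OF jI] v] unfolding u_def by simp
  define a where "a = L i *\<^sub>v (DD i j *\<^sub>v v)"
  define b where "b = DD i j *\<^sub>v (L j *\<^sub>v v)"
  define c where "c = C i *\<^sub>v (DD (i - 1) j *\<^sub>v v)"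
  have ac: "a \<in> carrier_vec (d i)" unfolding a_def using Lc Dc v by simp
  have bc: "b \<in> carrier_vec (d i)" unfolding b_def using Dc Ljv by simp
  have cc: "c \<in> carrier_vec (d i)" unfolding c_def using Cc D'c v by simp
  have Wbc: "W i *\<^sub>v a = W i *\<^sub>v (b + c)"
  proof (rule eq_vecI)
    fix l assume "l < dim_vec (W i *\<^sub>v (b + c))"
    then have l: "l < d i" using Wic by simp
    define X where "X = W i *\<^sub>v b"
    have Xc: "X \<in> carrier_vec (d i)" unfolding X_def using Wic bc by simp
    have "lam i l * X $ l = (Ct i j *\<^sub>v (Lam j *\<^sub>v u)) $ l"
      using e2 diag_mult_vec[OF Xc l] unfolding X_def b_def by metis
    also have "\<dots> = (\<Sum>m<d j. Ct i j $$ (l, m) * (Lam j *\<^sub>v u) $ m)"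
      by (rule mv_entry[OF Ctc mult_mat_vec_carrier[OF mat_carrier uc] l])
    also have "\<dots> = (\<Sum>m<d j. Ct i j $$ (l, m) * (lam j m * u $ m))"
    proof (intro sum.cong refl)
      fix m assume "m \<in> {..<d j}"
      then have m: "m < d j" by simp
      show "Ct i j $$ (l, m) * (Lam j *\<^sub>v u) $ m = Ct i j $$ (l, m) * (lam j m * u $ m)"
        by (subst diag_mult_vec[OF uc m]) simp
    qed
    finally have X1: "lam i l * X $ l = (\<Sum>m<d j. Ct i j $$ (l, m) * (lam j m * u $ m))" .
    have lnz: "lam i l \<noteq> 0" using lam_nz[OF iI l] .
    have "X $ l = (\<Sum>m<d j. Ct i j $$ (l, m) * (lam j m * u $ m)) / lam i l"
      using X1 lnz by (metis nonzero_mult_div_cancel_left)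
    then have X2: "X $ l = (\<Sum>m<d j. Ct i j $$ (l, m) * (lam j m * u $ m) / lam i l)"
      by (simp add: sum_divide_distrib)
    have A1: "(W i *\<^sub>v a) $ l = (\<Sum>m<d j. Ct i j $$ (l, m) * u $ m)"
      unfolding a_def e1 using mv_entry[OF Ctc uc l] by simp
    have A3: "(W i *\<^sub>v c) $ l = (\<Sum>m<d j. Mm i j $$ (l, m) * u $ m)"
      unfolding c_def e3 by (rule mv_entry[OF _ uc l]) (rule mult_carrier_mat[OF mult_carrier_mat[OF mult_carrier_mat[OF Wic Cc] D'c] Vjc])
    have "(W i *\<^sub>v (b + c)) $ l = X $ l + (W i *\<^sub>v c) $ l"
      using mult_add_distrib_mat_vec[OF Wic bc cc] Wic bc cc l unfolding X_def by simp
    also have "\<dots> = (\<Sum>m<d j. Ct i j $$ (l, m) * (lam j m * u $ m) / lam i l + Mm i j $$ (l, m) * u $ m)"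
      unfolding X2 A3 by (simp add: sum.distrib)
    also have "\<dots> = (\<Sum>m<d j. Ct i j $$ (l, m) * u $ m)"
    proof (intro sum.cong refl)
      fix m assume "m \<in> {..<d j}"
      then have m: "m < d j" by simp
      have q: "1 - lam j m / lam i l \<noteq> 0"
        using lam_disj[OF iI jI ij l m] lnz by (auto simp: field_simps)
      have "Ct i j $$ (l, m) = Mm i j $$ (l, m) * inverse (1 - lam j m / lam i l)" using l m by simp
      then have "Mm i j $$ (l, m) = Ct i j $$ (l, m) * (1 - lam j m / lam i l)" using q by (simp add: field_simps)
      then show "Ct i j $$ (l, m) * (lam j m * u $ m) / lam i l + Mm i j $$ (l, m) * u $ m = Ct i j $$ (l, m) * u $ m"
        by (rule aux_field[OF lnz])
    qed
    finally show "(W i *\<^sub>v a) $ l = (W i *\<^sub>v (b + c)) $ l" using A1 by simp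
  qed (use Wic in simp)
  have "a = V i *\<^sub>v (W i *\<^sub>v a)" using canc_v[OF Vic Wic VW[OF iI] ac] by simp
  also have "\<dots> = b + c" using Wbc canc_v[OF Vic Wic VW[OF iI]] bc cc by simp
  finally show ?thesis unfolding a_def b_def c_def .
qed

end

declare pert.simps[simp del]

context casc begin

abbreviation "P i x \<equiv> pert d DD i x"

lemma pert_unfold: "2 \<le> i \<Longrightarrow> P i x = vec (d i) (\<lambda>l. x i $ l + (\<Sum>j\<in>{1..<i}. (-1) ^ (i - 1 - j) * ((DD i j *\<^sub>v P j x) $ l)))"
  by (subst pert.simps) simp

lemma pert_le1: "i \<le> 1 \<Longrightarrow> P i x = x i"
  by (subst pert.simps) simp

lemma pert_car:
  assumes "i \<in> {1..n}" "\<forall>k\<in>{1..n}. x k \<in> carrier_vec (d k)"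
  shows "P i x \<in> carrier_vec (d i)"
proof (cases "i = 1")
  case True then show ?thesis using assms pert_le1[of 1] by simp
next
  case False then have "2 \<le> i" using assms by auto
  then show ?thesis by (simp add: pert_unfold)
qed

lemma Lin_car:
  assumes X: "\<forall>k\<in>{1..n}. x k \<in> carrier_vec (d k)"
  shows "\<forall>k\<in>{1..n}. Lin L C x k \<in> carrier_vec (d k)"
proof
  fix k assume k: "k \<in> {1..n}"
  show "Lin L C x k \<in> carrier_vec (d k)"
  proof (cases "k \<le> 1")
    case True then show ?thesis using k X L_car[OF k] unfolding Lin_def by simp
  next
    case False
    then have k2: "k \<in> {2..n}" and k1: "k - 1 \<in> {1..n}" using k by auto
    have "L k *\<^sub>v x k \<in> carrier_vec (d k)" using k X L_car[OF k] by simp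
    moreover have "C k *\<^sub>v x (k - 1) \<in> carrier_vec (d k)" using C_car[OF k2] X k1 by simp
    ultimately show ?thesis using False unfolding Lin_def by simp
  qed
qed

lemma DD_diag: "1 \<le> k \<Longrightarrow> DD k k = 1\<^sub>m (d k)"
  by (cases k) auto

lemma keyK:
  assumes i: "2 \<le> i" "i \<le> n" and X: "\<forall>k\<in>{1..n}. x k \<in> carrier_vec (d k)"
  shows "vec (d (i - 1)) (\<lambda>m. \<Sum>j\<in>{1..<i}. (-1) ^ (i - 1 - j) * ((DD (i - 1) j *\<^sub>v P j x) $ m)) = x (i - 1)"
proof -
  define k where "k = i - 1"
  have k1: "1 \<le> k" and ik: "i = Suc k" and kn: "k \<in> {1..n}" using i unfolding k_def by auto
  have Pk: "P k x \<in> carrier_vec (d k)" by (rule pert_car[OF kn X])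
  have xk: "x k \<in> carrier_vec (d k)" using X kn by blast
  have split: "(\<Sum>j\<in>{1..<i}. f j) = (\<Sum>j\<in>{1..<k}. f j) + f k" for f :: "nat \<Rightarrow> complex"
    unfolding ik using k1 by (simp add: sum.atLeastLessThan_Suc)
  show ?thesis unfolding k_def[symmetric]
  proof (rule eq_vecI)
    fix m assume "m < dim_vec (x k)"
    have "x k \<in> carrier_vec (d k)" using X kn by blast
    then have m: "m < d k" using \<open>m < dim_vec (x k)\<close> by simp
    have last: "(-1) ^ (k - k) * ((DD k k *\<^sub>v P k x) $ m) = P k x $ m"
      using DD_diag[OF k1] Pk unfolding ik by simp
    show "vec (d k) (\<lambda>m. \<Sum>j\<in>{1..<i}. (-1) ^ (k - j) * ((DD k j *\<^sub>v P j x) $ m)) $ m = x k $ m"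
    proof (cases "k = 1")
      case True
      then show ?thesis using m split[of "\<lambda>j. (-1) ^ (k - j) * ((DD k j *\<^sub>v P j x) $ m)"] last pert_le1[of 1] by simp
    next
      case False
      then have k2: "2 \<le> k" using k1 by simp
      have neg: "(\<Sum>j\<in>{1..<k}. (-1) ^ (k - j) * ((DD k j *\<^sub>v P j x) $ m))
          = - (\<Sum>j\<in>{1..<k}. (-1) ^ (k - 1 - j) * ((DD k j *\<^sub>v P j x) $ m))"
        unfolding sum_negf[symmetric]
      proof (intro sum.cong refl)
        fix j assume "j \<in> {1..<k}"
        then have "k - j = Suc (k - 1 - j)" by auto
        then show "(-1) ^ (k - j) * ((DD k j *\<^sub>v P j x) $ m) = - ((-1) ^ (k - 1 - j) * ((DD k j *\<^sub>v P j x) $ m))"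
          by simp
      qed
      have "P k x $ m = x k $ m + (\<Sum>j\<in>{1..<k}. (-1) ^ (k - 1 - j) * ((DD k j *\<^sub>v P j x) $ m))"
        using pert_unfold[OF k2, of x] m by simp
      then show ?thesis using m split[of "\<lambda>j. (-1) ^ (k - j) * ((DD k j *\<^sub>v P j x) $ m)"] last neg by simp
    qed
  qed (use xk in simp)
qed

lemma conj:
  assumes X: "\<forall>k\<in>{1..n}. x k \<in> carrier_vec (d k)"
  shows "i \<in> {1..n} \<Longrightarrow> P i (Lin L C x) = L i *\<^sub>v P i x"
proof (induction i rule: less_induct)
  case (less i)
  note iI = less.prems
  show ?case
  proof (cases "i = 1")
    case True then show ?thesis by (simp add: Lin_def pert_le1)
  next
    case False
    then have i2: "2 \<le> i" and i2': "i \<in> {2..n}" and iI1: "i - 1 \<in> {1..n}" using iI by auto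
    define s where "s j = ((-1) ^ (i - 1 - j) :: complex)" for j
    note Lc = L_car[OF iI] and Cc = C_car[OF i2']
    have Pj: "P j x \<in> carrier_vec (d j)" if "j \<in> {1..<i}" for j using pert_car[OF _ X] that iI by auto
    have Dj: "DD i j \<in> carrier_mat (d i) (d j)" if "j \<in> {1..<i}" for j using DD_dim that iI by auto
    have D'j: "DD (i - 1) j \<in> carrier_mat (d (i - 1)) (d j)" if "j \<in> {1..<i}" for j using DD_dim that iI by auto
    have IH: "P j (Lin L C x) = L j *\<^sub>v P j x" if "j \<in> {1..<i}" for j using less.IH that iI by auto
    define w where "w = vec (d i) (\<lambda>l. \<Sum>j\<in>{1..<i}. s j * ((DD i j *\<^sub>v P j x) $ l))"
    have wc: "w \<in> carrier_vec (d i)" unfolding w_def by simp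
    have xi: "x i \<in> carrier_vec (d i)" using X iI by auto
    have xi1: "x (i - 1) \<in> carrier_vec (d (i - 1))" using X iI1 by auto
    have Pi: "P i x = x i + w" unfolding pert_unfold[OF i2] w_def s_def
      by (rule eq_vecI) (use xi in auto)
    have Lw: "L i *\<^sub>v w = vec (d i) (\<lambda>l. \<Sum>j\<in>{1..<i}. s j * ((L i *\<^sub>v (DD i j *\<^sub>v P j x)) $ l))"
      unfolding w_def by (rule mv_lin_sum[OF Lc]) (rule mult_mat_vec_carrier[OF Dj Pj]; assumption)
    have Cx: "C i *\<^sub>v x (i - 1) = vec (d i) (\<lambda>l. \<Sum>j\<in>{1..<i}. s j * ((C i *\<^sub>v (DD (i - 1) j *\<^sub>v P j x)) $ l))"
    proof -
      have "C i *\<^sub>v x (i - 1) = C i *\<^sub>v vec (d (i - 1)) (\<lambda>m. \<Sum>j\<in>{1..<i}. s j * ((DD (i - 1) j *\<^sub>v P j x) $ m))"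
        using keyK[OF i2 _ X] iI unfolding s_def by simp
      also have "\<dots> = vec (d i) (\<lambda>l. \<Sum>j\<in>{1..<i}. s j * ((C i *\<^sub>v (DD (i - 1) j *\<^sub>v P j x)) $ l))"
        by (rule mv_lin_sum[OF Cc]) (rule mult_mat_vec_carrier[OF D'j Pj]; assumption)
      finally show ?thesis .
    qed
    show ?thesis
    proof (rule eq_vecI)
      fix l assume "l < dim_vec (L i *\<^sub>v P i x)"
      then have l: "l < d i" using Lc by simp
      have syl: "L i *\<^sub>v (DD i j *\<^sub>v P j x) = DD i j *\<^sub>v (L j *\<^sub>v P j x) + C i *\<^sub>v (DD (i - 1) j *\<^sub>v P j x)"
        if "j \<in> {1..<i}" for j using sylv[OF i2 _ _ _ Pj[OF that]] that iI by auto
      have "(L i *\<^sub>v P i x) $ l = (L i *\<^sub>v x i) $ l + (L i *\<^sub>v w) $ l"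
        unfolding Pi using mult_add_distrib_mat_vec[OF Lc xi wc] Lc xi wc l by simp
      also have "(L i *\<^sub>v w) $ l = (\<Sum>j\<in>{1..<i}. s j * ((DD i j *\<^sub>v (L j *\<^sub>v P j x)) $ l))
            + (\<Sum>j\<in>{1..<i}. s j * ((C i *\<^sub>v (DD (i - 1) j *\<^sub>v P j x)) $ l))"
      proof -
        have "(L i *\<^sub>v w) $ l = (\<Sum>j\<in>{1..<i}. s j * ((L i *\<^sub>v (DD i j *\<^sub>v P j x)) $ l))"
          unfolding Lw using l by simp
        also have "\<dots> = (\<Sum>j\<in>{1..<i}. s j * ((DD i j *\<^sub>v (L j *\<^sub>v P j x)) $ l) + s j * ((C i *\<^sub>v (DD (i - 1) j *\<^sub>v P j x)) $ l))"
        proof (intro sum.cong refl)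
          fix j assume j: "j \<in> {1..<i}"
          have "DD i j *\<^sub>v (L j *\<^sub>v P j x) \<in> carrier_vec (d i)" using Dj[OF j] L_car[of j] Pj[OF j] j iI by auto
          moreover have "C i *\<^sub>v (DD (i - 1) j *\<^sub>v P j x) \<in> carrier_vec (d i)" using Cc D'j[OF j] Pj[OF j] by auto
          ultimately show "s j * (L i *\<^sub>v (DD i j *\<^sub>v P j x)) $ l = s j * (DD i j *\<^sub>v (L j *\<^sub>v P j x)) $ l + s j * (C i *\<^sub>v (DD (i - 1) j *\<^sub>v P j x)) $ l"
            unfolding syl[OF j] using l Cc by (subst index_add_vec(1)) (auto simp: distrib_left)
        qed
        finally show ?thesis by (simp add: sum.distrib)
      qed
      finally have R: "(L i *\<^sub>v P i x) $ l = (L i *\<^sub>v x i) $ l + (\<Sum>j\<in>{1..<i}. s j * ((DD i j *\<^sub>v (L j *\<^sub>v P j x)) $ l))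
            + (\<Sum>j\<in>{1..<i}. s j * ((C i *\<^sub>v (DD (i - 1) j *\<^sub>v P j x)) $ l))" by simp
      have Lini: "Lin L C x i = L i *\<^sub>v x i + C i *\<^sub>v x (i - 1)" using False iI unfolding Lin_def by simp
      have "P i (Lin L C x) $ l = (Lin L C x i) $ l + (\<Sum>j\<in>{1..<i}. s j * ((DD i j *\<^sub>v P j (Lin L C x)) $ l))"
        unfolding pert_unfold[OF i2] s_def using l by simp
      also have "\<dots> = (L i *\<^sub>v x i) $ l + (C i *\<^sub>v x (i - 1)) $ l + (\<Sum>j\<in>{1..<i}. s j * ((DD i j *\<^sub>v (L j *\<^sub>v P j x)) $ l))"
        unfolding Lini using l Cc xi1 IH by simp
      also have "(C i *\<^sub>v x (i - 1)) $ l = (\<Sum>j\<in>{1..<i}. s j * ((C i *\<^sub>v (DD (i - 1) j *\<^sub>v P j x)) $ l))"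
        unfolding Cx using l by simp
      finally show "P i (Lin L C x) $ l = (L i *\<^sub>v P i x) $ l" unfolding R by simp
    qed (use Lc in \<open>simp add: pert_unfold[OF i2]\<close>)
  qed
qed

end

lemma opn_ge:
  fixes A :: "complex mat"
  assumes nN: "is_norm_on k Nk" and A: "A \<in> carrier_mat k k" and u: "u \<in> carrier_vec k"
    and unz: "u \<noteq> 0\<^sub>v k" and ev: "A *\<^sub>v u = \<mu> \<cdot>\<^sub>v u"
  shows "cmod \<mu> \<le> op_norm Nk k A"
proof -
  obtain c where c0: "c > 0" and c: "\<And>v l. v \<in> carrier_vec k \<Longrightarrow> l < k \<Longrightarrow> cmod (v $ l) \<le> c * Nk v"
    using nrm_lb[OF nN] by blast
  define K where "K = (\<Sum>l<k. (\<Sum>m<k. cmod (A $$ (l, m)) * c) * Nk (unit_vec k l))"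
  have bdd: "bdd_above {Nk (A *\<^sub>v x) | x. x \<in> carrier_vec k \<and> Nk x \<le> 1}"
  proof (rule bdd_aboveI[of _ K])
    fix y assume "y \<in> {Nk (A *\<^sub>v x) | x. x \<in> carrier_vec k \<and> Nk x \<le> 1}"
    then obtain x where x: "x \<in> carrier_vec k" "Nk x \<le> 1" and y: "y = Nk (A *\<^sub>v x)" by blast
    have Ax: "A *\<^sub>v x \<in> carrier_vec k" using A x by simp
    have "Nk (A *\<^sub>v x) \<le> (\<Sum>l<k. cmod ((A *\<^sub>v x) $ l) * Nk (unit_vec k l))" by (rule nrm_ub[OF nN Ax])
    also have "\<dots> \<le> K" unfolding K_def
    proof (rule sum_mono)
      fix l assume "l \<in> {..<k}"
      then have l: "l < k" by simp
      have "cmod ((A *\<^sub>v x) $ l) = cmod (\<Sum>m<k. A $$ (l, m) * x $ m)" using mv_entry[OF A x(1) l] by simp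
      also have "\<dots> \<le> (\<Sum>m<k. cmod (A $$ (l, m) * x $ m))" by (rule norm_sum)
      also have "\<dots> \<le> (\<Sum>m<k. cmod (A $$ (l, m)) * c)"
      proof (rule sum_mono)
        fix m assume "m \<in> {..<k}"
        then have "cmod (x $ m) \<le> c * Nk x" using c[OF x(1)] by simp
        also have "\<dots> \<le> c" using x(2) c0 by (simp add: mult_left_le)
        finally show "cmod (A $$ (l, m) * x $ m) \<le> cmod (A $$ (l, m)) * c"
          by (simp add: norm_mult mult_left_mono)
      qed
      finally show "cmod ((A *\<^sub>v x) $ l) * Nk (unit_vec k l) \<le> (\<Sum>m<k. cmod (A $$ (l, m)) * c) * Nk (unit_vec k l)"
        using nrm_nonneg[OF nN, of "unit_vec k l"] by (simp add: mult_right_mono)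
    qed
    finally show "y \<le> K" using y by simp
  qed
  have Nu: "Nk u > 0" using nrm_nonneg[OF nN u] nrm_zero_iff[OF nN u] unz by auto
  define a where "a = complex_of_real (1 / Nk u)"
  have ca: "cmod a = 1 / Nk u" unfolding a_def using Nu by (simp only: norm_of_real) simp
  have xc: "a \<cdot>\<^sub>v u \<in> carrier_vec k" using u by simp
  have Nx: "Nk (a \<cdot>\<^sub>v u) = 1" using nrm_smult[OF nN u, of a] ca Nu by simp
  have "A *\<^sub>v (a \<cdot>\<^sub>v u) = a \<cdot>\<^sub>v (\<mu> \<cdot>\<^sub>v u)" using mult_mat_vec[OF A u] ev by simp
  then have "Nk (A *\<^sub>v (a \<cdot>\<^sub>v u)) = cmod \<mu>"
    using nrm_smult[OF nN, of "\<mu> \<cdot>\<^sub>v u" a] nrm_smult[OF nN u, of \<mu>] u ca Nu by simp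
  then have mem: "cmod \<mu> \<in> {Nk (A *\<^sub>v x) | x. x \<in> carrier_vec k \<and> Nk x \<le> 1}"
    using xc Nx by (metis (mono_tags, lifting) mem_Collect_eq order_refl)
  show ?thesis unfolding op_norm_def by (rule cSup_upper[OF mem bdd])
qed

context casc begin

lemma opn_lt: "j \<in> {1..<n} \<Longrightarrow> op_norm (N j) (d j) (L j) < op_norm (N n) (d n) (L n)"
proof -
  have "\<forall>j. 1 \<le> j \<longrightarrow> j + Suc k = n \<longrightarrow> op_norm (N j) (d j) (L j) < op_norm (N n) (d n) (L n)" for k
  proof (induction k)
    case 0 then show ?case using norm_incr by force
  next
    case (Suc k)
    show ?case
    proof (intro allI impI)
      fix j assume j: "1 \<le> j" "j + Suc (Suc k) = n"
      have "op_norm (N j) (d j) (L j) < op_norm (N (Suc j)) (d (Suc j)) (L (Suc j))" using norm_incr j by auto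
      also have "\<dots> < op_norm (N n) (d n) (L n)" using Suc.IH j by auto
      finally show "op_norm (N j) (d j) (L j) < op_norm (N n) (d n) (L n)" .
    qed
  qed
  moreover assume "j \<in> {1..<n}"
  ultimately show ?thesis by (metis atLeastLessThan_iff less_imp_Suc_add add_Suc_right add.commute)
qed

lemma lam_lt1:
  assumes j: "j \<in> {1..<n}" and l: "l < d j"
  shows "cmod (lam j l) < 1"
proof -
  have jI: "j \<in> {1..n}" using j by auto
  have "cmod (lam j l) \<le> op_norm (N j) (d j) (L j)"
    by (rule opn_ge[OF norms[OF jI] L_car[OF jI] eigvec[OF jI l]])
  also have "\<dots> < op_norm (N n) (d n) (L n)" by (rule opn_lt[OF j])
  also have "\<dots> \<le> 1" by (rule norm_le1)
  finally show ?thesis .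
qed

lemma Lin_iter_car:
  assumes X: "\<forall>k\<in>{1..n}. x k \<in> carrier_vec (d k)"
  shows "\<forall>k\<in>{1..n}. (Lin L C ^^ t) x k \<in> carrier_vec (d k)"
proof (induction t)
  case 0 then show ?case using X by simp
next
  case (Suc t) then show ?case using Lin_car[OF Suc] by simp
qed

lemma nom_pert:
  assumes X: "\<forall>k\<in>{1..n}. x k \<in> carrier_vec (d k)"
  shows "i \<in> {1..n} \<Longrightarrow> (Nom L ^^ t) (pert_map d DD x) i = P i ((Lin L C ^^ t) x)"
proof (induction t arbitrary: i)
  case 0 then show ?case by (simp add: pert_map_def)
next
  case (Suc t)
  have "(Nom L ^^ Suc t) (pert_map d DD x) i = L i *\<^sub>v (Nom L ^^ t) (pert_map d DD x) i" by (simp add: Nom_def)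
  also have "\<dots> = L i *\<^sub>v P i ((Lin L C ^^ t) x)" using Suc by simp
  also have "\<dots> = P i (Lin L C ((Lin L C ^^ t) x))" using conj[OF Lin_iter_car[OF X] Suc.prems] by simp
  finally show ?case by simp
qed

lemma nom_car:
  assumes j: "j \<in> {1..n}" and Y: "Y j \<in> carrier_vec (d j)"
  shows "(Nom L ^^ t) Y j \<in> carrier_vec (d j)"
  by (induction t) (use Y L_car[OF j] in \<open>auto simp: Nom_def\<close>)

lemma nom_W:
  assumes j: "j \<in> {1..n}" and Y: "Y j \<in> carrier_vec (d j)"
  shows "W j *\<^sub>v ((Nom L ^^ t) Y j) = vec (d j) (\<lambda>l. lam j l ^ t * (W j *\<^sub>v Y j) $ l)"
proof (induction t)
  case 0 then show ?case using W_car[OF j] Y by (intro eq_vecI) auto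
next
  case (Suc t)
  have "W j *\<^sub>v ((Nom L ^^ Suc t) Y j) = W j *\<^sub>v (L j *\<^sub>v (Nom L ^^ t) Y j)" by (simp add: Nom_def)
  also have "\<dots> = Lam j *\<^sub>v (W j *\<^sub>v (Nom L ^^ t) Y j)" by (rule WL_v[OF j nom_car[OF j, of Y, OF Y]])
  also have "\<dots> = vec (d j) (\<lambda>l. lam j l ^ Suc t * (W j *\<^sub>v Y j) $ l)"
  proof (rule eq_vecI)
    fix l assume "l < dim_vec (vec (d j) (\<lambda>l. lam j l ^ Suc t * (W j *\<^sub>v Y j) $ l))"
    then have l: "l < d j" by simp
    have wc: "W j *\<^sub>v (Nom L ^^ t) Y j \<in> carrier_vec (d j)" using W_car[OF j] nom_car[OF j, of Y, OF Y] by simp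
    show "(Lam j *\<^sub>v (W j *\<^sub>v (Nom L ^^ t) Y j)) $ l = vec (d j) (\<lambda>l. lam j l ^ Suc t * (W j *\<^sub>v Y j) $ l) $ l"
      by (subst diag_mult_vec[OF wc l]) (use l Suc in simp)
  qed simp
  finally show ?case .
qed

lemma nom_decay:
  assumes j: "j \<in> {1..<n}" and Y: "Y j \<in> carrier_vec (d j)" and a: "a < d j"
  shows "(\<lambda>t. ((Nom L ^^ t) Y j) $ a) \<longlonglongrightarrow> 0"
proof -
  have jI: "j \<in> {1..n}" using j by auto
  have eq: "((Nom L ^^ t) Y j) $ a = (\<Sum>l<d j. V j $$ (a, l) * (lam j l ^ t * (W j *\<^sub>v Y j) $ l))" for t
  proof -
    have "(Nom L ^^ t) Y j = V j *\<^sub>v (W j *\<^sub>v ((Nom L ^^ t) Y j))"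
      using canc_v[OF V_car[OF jI] W_car[OF jI] VW[OF jI] nom_car[OF jI, of Y, OF Y]] by simp
    also have "\<dots> = V j *\<^sub>v vec (d j) (\<lambda>l. lam j l ^ t * (W j *\<^sub>v Y j) $ l)" unfolding nom_W[OF jI, of Y, OF Y] ..
    finally have "((Nom L ^^ t) Y j) $ a = (V j *\<^sub>v vec (d j) (\<lambda>l. lam j l ^ t * (W j *\<^sub>v Y j) $ l)) $ a" by simp
    also have "\<dots> = (\<Sum>l<d j. V j $$ (a, l) * vec (d j) (\<lambda>l. lam j l ^ t * (W j *\<^sub>v Y j) $ l) $ l)"
      by (rule mv_entry[OF V_car[OF jI] _ a]) simp
    also have "\<dots> = (\<Sum>l<d j. V j $$ (a, l) * (lam j l ^ t * (W j *\<^sub>v Y j) $ l))" by (intro sum.cong) auto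
    finally show ?thesis .
  qed
  show ?thesis unfolding eq
  proof (rule tendsto_null_sum)
    fix l assume "l \<in> {..<d j}"
    then have "(\<lambda>t. lam j l ^ t) \<longlonglongrightarrow> 0" using lam_lt1[OF j] by (intro LIMSEQ_power_zero) auto
    then have "(\<lambda>t. lam j l ^ t * (W j *\<^sub>v Y j) $ l) \<longlonglongrightarrow> 0" by (rule tendsto_mult_left_zero)
    then show "(\<lambda>t. V j $$ (a, l) * (lam j l ^ t * (W j *\<^sub>v Y j) $ l)) \<longlonglongrightarrow> 0" by (rule tendsto_mult_right_zero)
  qed
qed

end

context casc begin

lemma block_lim:
  assumes X: "\<forall>k\<in>{1..n}. x k \<in> carrier_vec (d k)" and i: "i \<in> {1..n}"
  shows "(\<lambda>t. N i ((Lin L C ^^ t) x i - (Nom L ^^ t) (pert_map d DD x) i)) \<longlonglongrightarrow> 0"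
proof -
  define z where "z t = (Lin L C ^^ t) x" for t
  define Y where "Y = pert_map d DD x"
  have zc: "\<forall>k\<in>{1..n}. z t k \<in> carrier_vec (d k)" for t unfolding z_def by (rule Lin_iter_car[OF X])
  have NP: "(Nom L ^^ t) Y k = P k (z t)" if "k \<in> {1..n}" for k t
    unfolding Y_def z_def by (rule nom_pert[OF X that])
  have Yc: "Y k \<in> carrier_vec (d k)" if "k \<in> {1..n}" for k
    unfolding Y_def pert_map_def by (rule pert_car[OF that X])
  note nN = norms[OF i]
  show ?thesis
  proof (cases "i = 1")
    case True
    have "N i (z t i - (Nom L ^^ t) Y i) = 0" for t
    proof -
      have "z t i - (Nom L ^^ t) Y i = 0\<^sub>v (d i)" unfolding NP[OF i] using True pert_le1[of i] zc[of t] i by auto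
      then show ?thesis using nrm_zero_iff[OF nN, of "0\<^sub>v (d i)"] by simp
    qed
    then show ?thesis unfolding z_def[symmetric] Y_def[symmetric] by simp
  next
    case False
    then have i2: "2 \<le> i" using i by auto
    define s where "s j = ((-1) ^ (i - 1 - j) :: complex)" for j
    define e where "e l t = - (\<Sum>j\<in>{1..<i}. s j * ((DD i j *\<^sub>v (Nom L ^^ t) Y j) $ l))" for l t
    have diff: "z t i - (Nom L ^^ t) Y i = vec (d i) (\<lambda>l. e l t)" for t
    proof -
      have zi: "z t i \<in> carrier_vec (d i)" using zc i by blast
      have PY: "P j (z t) = (Nom L ^^ t) Y j" if "j \<in> {1..<i}" for j using NP[of j t] that i by auto
      show ?thesis unfolding NP[OF i] pert_unfold[OF i2]
      proof (rule eq_vecI)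
        fix l assume "l < dim_vec (vec (d i) (\<lambda>l. e l t))"
        then have l: "l < d i" by simp
        show "(z t i - vec (d i) (\<lambda>l. z t i $ l + (\<Sum>j = 1..<i. (- 1) ^ (i - 1 - j) * (DD i j *\<^sub>v P j (z t)) $ l))) $ l = vec (d i) (\<lambda>l. e l t) $ l"
          using l zi PY unfolding e_def s_def by simp
      qed (use zi in simp)
    qed
    have elim: "(\<lambda>t. e l t) \<longlonglongrightarrow> 0" if l: "l < d i" for l
    proof -
      have "(\<lambda>t. \<Sum>j\<in>{1..<i}. s j * ((DD i j *\<^sub>v (Nom L ^^ t) Y j) $ l)) \<longlonglongrightarrow> 0"
      proof (rule tendsto_null_sum)
        fix j assume j: "j \<in> {1..<i}"
        then have jn: "j \<in> {1..<n}" and jI: "j \<in> {1..n}" using i by auto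
        have Dc: "DD i j \<in> carrier_mat (d i) (d j)" using DD_dim j i by auto
        have eq: "(DD i j *\<^sub>v (Nom L ^^ t) Y j) $ l = (\<Sum>m<d j. DD i j $$ (l, m) * ((Nom L ^^ t) Y j) $ m)" for t
          by (rule mv_entry[OF Dc nom_car[OF jI, of Y, OF Yc[OF jI]] l])
        have "(\<lambda>t. \<Sum>m<d j. DD i j $$ (l, m) * ((Nom L ^^ t) Y j) $ m) \<longlonglongrightarrow> 0"
        proof (rule tendsto_null_sum)
          fix m assume "m \<in> {..<d j}"
          then have "(\<lambda>t. ((Nom L ^^ t) Y j) $ m) \<longlonglongrightarrow> 0" using nom_decay[OF jn, of Y, OF Yc[OF jI]] by simp
          then show "(\<lambda>t. DD i j $$ (l, m) * ((Nom L ^^ t) Y j) $ m) \<longlonglongrightarrow> 0" by (rule tendsto_mult_right_zero)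
        qed
        then show "(\<lambda>t. s j * ((DD i j *\<^sub>v (Nom L ^^ t) Y j) $ l)) \<longlonglongrightarrow> 0"
          unfolding eq by (rule tendsto_mult_right_zero)
      qed
      then show ?thesis unfolding e_def using tendsto_minus by fastforce
    qed
    define b where "b t = (\<Sum>l<d i. cmod (e l t) * N i (unit_vec (d i) l))" for t
    have b0: "b \<longlonglongrightarrow> 0" unfolding b_def
    proof (rule tendsto_null_sum)
      fix l assume "l \<in> {..<d i}"
      then have "(\<lambda>t. e l t) \<longlonglongrightarrow> 0" using elim by simp
      then have "(\<lambda>t. cmod (e l t)) \<longlonglongrightarrow> 0" by (rule tendsto_norm_zero)
      then show "(\<lambda>t. cmod (e l t) * N i (unit_vec (d i) l)) \<longlonglongrightarrow> 0" by (rule tendsto_mult_left_zero)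
    qed
    have bnd: "N i (z t i - (Nom L ^^ t) Y i) \<le> b t" for t
      unfolding diff b_def using nrm_ub[OF nN, of "vec (d i) (\<lambda>l. e l t)"] by simp
    have nn: "0 \<le> N i (z t i - (Nom L ^^ t) Y i)" for t unfolding diff by (rule nrm_nonneg[OF nN]) simp
    have "(\<lambda>t. N i (z t i - (Nom L ^^ t) Y i)) \<longlonglongrightarrow> 0"
      by (rule tendsto_sandwich[of "\<lambda>t. 0" _ _ b]) (use nn bnd b0 in auto)
    then show ?thesis unfolding z_def Y_def .
  qed
qed

lemma main:
  assumes X: "\<forall>k\<in>{1..n}. x k \<in> carrier_vec (d k)"
  shows "(\<lambda>t. prod_norm n N (\<lambda>i. ((Lin L C ^^ t) x) i - ((Nom L ^^ t) (pert_map d DD x)) i)) \<longlonglongrightarrow> 0"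
  unfolding prod_norm_def by (rule tendsto_null_sum) (rule block_lim[OF X], simp)

end

theorem corollary1:
  fixes n :: nat and d :: "nat \<Rightarrow> nat"
    and N :: "nat \<Rightarrow> complex vec \<Rightarrow> real"
    and L C V :: "nat \<Rightarrow> complex mat"
    and lam :: "nat \<Rightarrow> nat \<Rightarrow> complex"
  assumes n: "n \<ge> 1"
    and dpos: "\<And>i. i \<in> {1..n} \<Longrightarrow> d i \<ge> 1"
    and norms: "\<And>i. i \<in> {1..n} \<Longrightarrow> is_norm_on (d i) (N i)"
    and L_car: "\<And>i. i \<in> {1..n} \<Longrightarrow> L i \<in> carrier_mat (d i) (d i)"
    and C_car: "\<And>i. i \<in> {2..n} \<Longrightarrow> C i \<in> carrier_mat (d i) (d (i - 1))"
    and L_inv: "\<And>i. i \<in> {1..n} \<Longrightarrow> invertible_mat (L i)"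
    and V_car: "\<And>i. i \<in> {1..n} \<Longrightarrow> V i \<in> carrier_mat (d i) (d i)"
    and V_inv: "\<And>i. i \<in> {1..n} \<Longrightarrow> invertible_mat (V i)"
    and diagonalize: "\<And>i. i \<in> {1..n} \<Longrightarrow>
          L i * V i = V i * mat (d i) (d i) (\<lambda>(l, m). if l = m then lam i l else 0)"
    and spec_disj: "\<And>i j. i \<in> {1..n} \<Longrightarrow> j \<in> {1..n} \<Longrightarrow> i \<noteq> j \<Longrightarrow>
          spectrum (L i) \<inter> spectrum (L j) = {}"
    and norm_incr: "\<And>i. i \<in> {1..<n} \<Longrightarrow> op_norm (N i) (d i) (L i) < op_norm (N (Suc i)) (d (Suc i)) (L (Suc i))"
    and norm_le1: "op_norm (N n) (d n) (L n) \<le> 1"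
  shows "\<forall>x. (\<forall>i\<in>{1..n}. x i \<in> carrier_vec (d i)) \<longrightarrow>
           (\<lambda>t. prod_norm n N (\<lambda>i. ((Lin L C ^^ t) x) i
                   - ((Nom L ^^ t) (pert_map d (Dmat d L C V lam) x)) i)) \<longlonglongrightarrow> 0"
proof -
  interpret casc n d N L C V lam
    by (unfold_locales; fact assms)
  show ?thesis using main by blast
qed

end
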